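(* Let $\mathbf{k}$ be a field with algebraic closure $\overline{\mathbf{k}}$, let $p\ge3$ and $q\ge1$ be integers, and fix values $e_1,\dots,e_{qp}\in\mathbf{k}$. Let $f_0=t^q+e_pt^{q-1}+\cdots+e_{(q-1)p}t+e_{qp}$ and $f_i=e_it^{q-1}+e_{p+i}t^{q-2}+\cdots+e_{(q-1)p+i}$ for $1\le i\le p-1$, as polynomials in $\mathbf{k}[t]$. Then $f_0,f_1,\dots,f_{p-1}$ have a common root in $\overline{\mathbf{k}}$ if and only if for every $\mu=(\mu_1,\dots,\mu_{p-1})\in\overline{\mathbf{k}}^{p-1}$, the polynomials $f_0$ and $h_\mu=\sum_{i=1}^{p-1}\mu_if_i$ have a common root in $\overline{\mathbf{k}}$. *)

theory Defs
  imports "HOL-Computational_Algebra.Polynomial"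
begin

definition field_embedding :: "('k::field \<Rightarrow> 'K::field) \<Rightarrow> bool" where
  "field_embedding \<phi> \<longleftrightarrow> \<phi> 0 = 0 \<and> \<phi> 1 = 1 \<and>
     (\<forall>x y. \<phi> (x + y) = \<phi> x + \<phi> y) \<and> (\<forall>x y. \<phi> (x * y) = \<phi> x * \<phi> y) \<and> inj \<phi>"

definition is_algebraic_closure :: "('k::field \<Rightarrow> 'K::alg_closed_field) \<Rightarrow> bool" where
  "is_algebraic_closure \<phi> \<longleftrightarrow> field_embedding \<phi> \<and>
     (\<forall>x::'K. \<exists>g::'k poly. g \<noteq> 0 \<and> poly (map_poly \<phi> g) x = 0)"

definition f0 :: "nat \<Rightarrow> nat \<Rightarrow> (nat \<Rightarrow> 'k::field) \<Rightarrow> 'k poly" where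
  "f0 p q e = monom 1 q + (\<Sum>j=1..q. monom (e (j * p)) (q - j))"

definition fi :: "nat \<Rightarrow> nat \<Rightarrow> (nat \<Rightarrow> 'k::field) \<Rightarrow> nat \<Rightarrow> 'k poly" where
  "fi p q e i = (\<Sum>j=0..q-1. monom (e (j * p + i)) (q - 1 - j))"

end

theory Submission
  imports Defs
begin

lemma alg_closed_infinite: "infinite (UNIV :: 'K::alg_closed_field set)"
proof
  assume fin: "finite (UNIV :: 'K set)"
  define P :: "'K poly" where "P = (\<Prod>a\<in>UNIV. [:-a, 1:]) + 1"
  have d: "degree (\<Prod>a\<in>(UNIV::'K set). [:-a, 1:]) = card (UNIV :: 'K set)"
    by (subst degree_prod_eq_sum_degree) auto
  have "card (UNIV :: 'K set) > 0" using fin by (simp add: finite_UNIV_card_ge_0)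
  hence "degree P > 0" unfolding P_def using d
    by (metis degree_add_eq_left degree_1)
  then obtain x where "poly P x = 0" using alg_closed_imp_poly_has_root by blast
  moreover have "poly (\<Prod>a\<in>(UNIV::'K set). [:-a, 1:]) x = 0"
    using fin by (simp add: poly_prod prod_zero_iff)
  ultimately show False unfolding P_def by simp
qed

lemma coeff_f0: assumes "q \<ge> 1" shows "coeff (f0 p q e) q = 1"
proof -
  have "coeff (\<Sum>j=1..q. monom (e (j * p)) (q - j)) q = 0"
    unfolding coeff_sum coeff_monom using assms by (intro sum.neutral) auto
  thus ?thesis unfolding f0_def by (simp add: coeff_monom)
qed

theorem lemma4p3:
  fixes \<phi> :: "'k::field \<Rightarrow> 'K::alg_closed_field"
    and p q :: nat and e :: "nat \<Rightarrow> 'k"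
  assumes "is_algebraic_closure \<phi>"
    and "p \<ge> 3" and "q \<ge> 1"
  shows "(\<exists>x::'K. poly (map_poly \<phi> (f0 p q e)) x = 0 \<and>
                 (\<forall>i\<in>{1..p-1}. poly (map_poly \<phi> (fi p q e i)) x = 0))
     \<longleftrightarrow> (\<forall>\<mu>::nat \<Rightarrow> 'K. \<exists>x::'K. poly (map_poly \<phi> (f0 p q e)) x = 0 \<and>
                 poly (\<Sum>i=1..p-1. smult (\<mu> i) (map_poly \<phi> (fi p q e i))) x = 0)"
proof
  assume "\<exists>x::'K. poly (map_poly \<phi> (f0 p q e)) x = 0 \<and>
                 (\<forall>i\<in>{1..p-1}. poly (map_poly \<phi> (fi p q e i)) x = 0)"
  then show "\<forall>\<mu>::nat \<Rightarrow> 'K. \<exists>x::'K. poly (map_poly \<phi> (f0 p q e)) x = 0 \<and>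
                 poly (\<Sum>i=1..p-1. smult (\<mu> i) (map_poly \<phi> (fi p q e i))) x = 0"
    by (auto simp: poly_sum)
next
  define F0 where "F0 = map_poly \<phi> (f0 p q e)"
  define F where "F = (\<lambda>i. map_poly \<phi> (fi p q e i))"
  assume H: "\<forall>\<mu>::nat \<Rightarrow> 'K. \<exists>x::'K. poly (map_poly \<phi> (f0 p q e)) x = 0 \<and>
                 poly (\<Sum>i=1..p-1. smult (\<mu> i) (map_poly \<phi> (fi p q e i))) x = 0"
  show "\<exists>x::'K. poly (map_poly \<phi> (f0 p q e)) x = 0 \<and>
                 (\<forall>i\<in>{1..p-1}. poly (map_poly \<phi> (fi p q e i)) x = 0)"
  proof (rule ccontr)
    assume N: "\<not> ?thesis"
    have emb: "\<phi> 0 = 0" "\<phi> 1 = 1" using assms(1)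
      unfolding is_algebraic_closure_def field_embedding_def by auto
    have "coeff F0 q = 1" unfolding F0_def
      using emb coeff_f0[OF assms(3), of p e] by (simp add: coeff_map_poly)
    hence "F0 \<noteq> 0" by auto
    hence finR: "finite {x. poly F0 x = 0}" by (rule poly_roots_finite)
    define P where "P = (\<lambda>x. \<Sum>i=1..p-1. monom (poly (F i) x) i)"
    have Pnz: "P x \<noteq> 0" if rx: "poly F0 x = 0" for x
    proof -
      obtain i where i: "i \<in> {1..p-1}" "poly (F i) x \<noteq> 0"
        using N rx unfolding F0_def F_def by auto
      have "coeff (P x) i = poly (F i) x"
        unfolding P_def coeff_sum coeff_monom using i(1)
        by (simp add: sum.delta)
      thus ?thesis using i by auto
    qed
    have "finite (\<Union>x\<in>{x. poly F0 x = 0}. {c. poly (P x) c = 0})"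
      using finR Pnz poly_roots_finite by blast
    then obtain c where c: "c \<notin> (\<Union>x\<in>{x. poly F0 x = 0}. {c. poly (P x) c = 0})"
      using alg_closed_infinite ex_new_if_finite by blast
    obtain x where x: "poly F0 x = 0"
      "poly (\<Sum>i=1..p-1. smult (c ^ i) (F i)) x = 0"
      using H[rule_format, of "\<lambda>i. c ^ i"] unfolding F0_def F_def by blast
    have "poly (P x) c = poly (\<Sum>i=1..p-1. smult (c ^ i) (F i)) x"
      unfolding P_def by (simp add: poly_sum poly_monom mult.commute)
    thus False using c x by auto
  qed
qed

end
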